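(* Let $\operatorname{P}\in\operatorname{MM}(A,\theta,S)$, let $i\in S_j$, and suppose $0\le|A_{y,S_j}|\le1$ for all $y\in\mathbb{Y}_{S_j}^{\neq}$. Then for every $\tilde\theta_i\in(0,1)$, the proportional $\tilde\theta_i$-covariation scheme minimizes the CD distance $\mathcal{D}_{\operatorname{CD}}(\sigma(\operatorname{P}),\operatorname{P})$ among all $\tilde\theta_i$-covariation schemes $\sigma$.
   Context: Let $\mathbb{Y}$ be a finite set with $q$ elements. A monomial model $\operatorname{MM}(A,\theta,S)$ is given by $A\in\mathcal{M}_{q\times k}(\mathbb{Z}_{\ge0})$ with rows $A_y$, parameters $\theta\in\mathbb{R}^k_{>0}$, and a partition $S=\{S_1,\dots,S_n\}$ of $[k]$ with each block $(\theta_l)_{l\in S_m}$ in the open probability simplex; $\operatorname{P}(y)=\prod_l\theta_l^{A_{y,l}}$, a probability distribution for every such parameter. $|A_{y,S_j}|=\sum_{l\in S_j}A_{y,l}$; $\mathbb{Y}_{S_j}^{\neq}=\{y\in\mathbb{Y}: A_{y,l}\ne0\text{ for some }l\in S_j\}$. A $\tilde\theta_i$-covariation scheme $\sigma$ maps $\theta$ to $\tilde\theta$ with $\tilde\theta_i$ given, $\tilde\theta_l=\theta_l$ for $l\notin S_j$, and $(\tilde\theta_l)_{l\in S_j}$ in the open simplex; $\sigma(\operatorname{P})(y)=\tilde\theta^{A_y}$. The proportional scheme sets $\tilde\theta_k=\frac{1-\tilde\theta_i}{1-\theta_i}\theta_k$ for $k\in S_j\setminus\{i\}$. The CD distance is $\mathcal{D}_{\operatorname{CD}}(\tilde{\operatorname{P}},\operatorname{P})=\log\max_{y}\frac{\tilde{\operatorname{P}}(y)}{\operatorname{P}(y)}-\log\min_y\frac{\tilde{\operatorname{P}}(y)}{\operatorname{P}(y)}$.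 *)

theory Defs
  imports Complex_Main
begin

text \<open>Parameters are functions nat => real; only the indices in {1..k} matter.\<close>

definition open_simplex :: "nat set \<Rightarrow> (nat \<Rightarrow> real) \<Rightarrow> bool" where
  "open_simplex B t \<longleftrightarrow> (\<forall>l\<in>B. t l > 0) \<and> (\<Sum>l\<in>B. t l) = 1"

definition is_partition :: "nat set set \<Rightarrow> nat \<Rightarrow> bool" where
  "is_partition S k \<longleftrightarrow> (\<forall>B\<in>S. B \<noteq> {}) \<and>
     (\<forall>B\<in>S. \<forall>C\<in>S. B \<noteq> C \<longrightarrow> B \<inter> C = {}) \<and> \<Union>S = {1..k}"

definition valid_param :: "nat \<Rightarrow> nat set set \<Rightarrow> (nat \<Rightarrow> real) \<Rightarrow> bool" where
  "valid_param k S t \<longleftrightarrow> (\<forall>l\<in>{1..k}. t l > 0) \<and> (\<forall>B\<in>S. open_simplex B t)"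

definition mono_prob :: "nat \<Rightarrow> ('y \<Rightarrow> nat \<Rightarrow> nat) \<Rightarrow> (nat \<Rightarrow> real) \<Rightarrow> 'y \<Rightarrow> real" where
  "mono_prob k A t y = (\<Prod>l\<in>{1..k}. t l ^ A y l)"

definition monomial_model ::
  "'y set \<Rightarrow> nat \<Rightarrow> ('y \<Rightarrow> nat \<Rightarrow> nat) \<Rightarrow> nat set set \<Rightarrow> (nat \<Rightarrow> real) \<Rightarrow> bool" where
  "monomial_model Y k A S \<theta> \<longleftrightarrow> finite Y \<and> Y \<noteq> {} \<and> is_partition S k \<and>
     valid_param k S \<theta> \<and>
     (\<forall>t. valid_param k S t \<longrightarrow> (\<Sum>y\<in>Y. mono_prob k A t y) = 1)"

text \<open>theta' is the image of theta under a ti-covariation scheme for index i in block Sj.\<close>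
definition covariation :: "nat \<Rightarrow> nat set \<Rightarrow> nat \<Rightarrow> real \<Rightarrow> (nat \<Rightarrow> real) \<Rightarrow> (nat \<Rightarrow> real) \<Rightarrow> bool" where
  "covariation k Sj i ti \<theta> \<theta>' \<longleftrightarrow> \<theta>' i = ti \<and> (\<forall>l\<in>{1..k} - Sj. \<theta>' l = \<theta> l) \<and>
     open_simplex Sj \<theta>'"

definition proportional :: "nat set \<Rightarrow> nat \<Rightarrow> real \<Rightarrow> (nat \<Rightarrow> real) \<Rightarrow> nat \<Rightarrow> real" where
  "proportional Sj i ti \<theta> l =
     (if l = i then ti else if l \<in> Sj then (1 - ti) / (1 - \<theta> i) * \<theta> l else \<theta> l)"

definition CD_dist :: "'y set \<Rightarrow> ('y \<Rightarrow> real) \<Rightarrow> ('y \<Rightarrow> real) \<Rightarrow> real" where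
  "CD_dist Y P' P = ln (Max ((\<lambda>y. P' y / P y) ` Y)) - ln (Min ((\<lambda>y. P' y / P y) ` Y))"

end

theory Submission
  imports Defs
begin

lemma mono_ratio:
  assumes "Sj \<subseteq> {1..k}" "\<forall>m\<in>{1..k}. \<theta> m > 0" "\<forall>m\<in>{1..k}-Sj. t m = \<theta> m"
  shows "mono_prob k A t y = mono_prob k A \<theta> y * (\<Prod>m\<in>Sj. (t m / \<theta> m) ^ A y m)"
proof -
  have "mono_prob k A t y = (\<Prod>m\<in>{1..k}. \<theta> m ^ A y m * (t m / \<theta> m) ^ A y m)"
    unfolding mono_prob_def
  proof (rule prod.cong)
    fix m assume "m \<in> {1..k}"
    then have "\<theta> m > 0" using assms(2) by blast
    then have "\<theta> m \<noteq> 0" by simp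
    then show "t m ^ A y m = \<theta> m ^ A y m * (t m / \<theta> m) ^ A y m"
      by (simp add: power_mult_distrib[symmetric])
  qed simp
  also have "\<dots> = mono_prob k A \<theta> y * (\<Prod>m\<in>{1..k}. (t m / \<theta> m) ^ A y m)"
    by (simp add: prod.distrib mono_prob_def)
  also have "(\<Prod>m\<in>{1..k}. (t m / \<theta> m) ^ A y m) = (\<Prod>m\<in>Sj. (t m / \<theta> m) ^ A y m)"
    by (rule prod.mono_neutral_right) (use assms in auto)
  finally show ?thesis .
qed

lemma prod_single:
  fixes f :: "nat \<Rightarrow> real"
  assumes "finite Sj" "m \<in> Sj" "A y m \<noteq> 0" "(\<Sum>l\<in>Sj. A y l) \<le> 1"
  shows "(\<Prod>l\<in>Sj. f l ^ A y l) = f m \<and> A y m = 1"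
proof -
  have s: "(\<Sum>l\<in>Sj. A y l) = A y m + (\<Sum>l\<in>Sj-{m}. A y l)"
    using assms by (simp add: sum.remove)
  have "A y m = 1" using s assms(3,4) by linarith
  have "(\<Sum>l\<in>Sj-{m}. A y l) = 0" using s assms(3,4) by linarith
  then have z: "\<forall>l\<in>Sj-{m}. A y l = 0" using assms(1) by simp
  have "(\<Prod>l\<in>Sj. f l ^ A y l) = f m ^ A y m * (\<Prod>l\<in>Sj-{m}. f l ^ A y l)"
    using assms by (simp add: prod.remove)
  also have "(\<Prod>l\<in>Sj-{m}. f l ^ A y l) = 1" using z by simp
  finally show ?thesis using \<open>A y m = 1\<close> by simp
qed

lemma all_used:
  assumes mm: "monomial_model Y k A S \<theta>" and Sj: "Sj \<in> S" and l0: "l0 \<in> Sj"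
    and y0: "y0 \<in> Y" "A y0 l0 \<noteq> 0" and l: "l \<in> Sj"
  shows "\<exists>y\<in>Y. A y l \<noteq> 0"
proof (rule ccontr)
  assume "\<not> ?thesis"
  then have Al: "\<forall>y\<in>Y. A y l = 0" by auto
  have ll0: "l \<noteq> l0" using Al y0 by auto
  from mm have fY: "finite Y" and part: "is_partition S k" and vp: "valid_param k S \<theta>"
    and sum1: "\<forall>t. valid_param k S t \<longrightarrow> (\<Sum>y\<in>Y. mono_prob k A t y) = 1"
    unfolding monomial_model_def by auto
  have sub: "Sj \<subseteq> {1..k}" using part Sj unfolding is_partition_def by auto
  have fSj: "finite Sj" using sub finite_subset by blast
  have pos: "\<forall>m\<in>{1..k}. \<theta> m > 0" using vp unfolding valid_param_def by auto
  have simpl: "\<forall>B\<in>S. open_simplex B \<theta>" using vp unfolding valid_param_def by auto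
  define c where "c = \<theta> l0 / 2"
  have cpos: "c > 0" using pos sub l0 unfolding c_def by auto
  define d where "d = (\<lambda>m. (if m = l then c else 0) - (if m = l0 then c else (0::real)))"
  define t where "t = (\<lambda>m. \<theta> m + d m)"
  have t_l0: "t l0 = \<theta> l0 / 2" using ll0 unfolding t_def d_def c_def by auto
  have t_l: "t l = \<theta> l + c" using ll0 unfolding t_def d_def by auto
  have t_o: "\<And>m. m \<noteq> l \<Longrightarrow> m \<noteq> l0 \<Longrightarrow> t m = \<theta> m" unfolding t_def d_def by auto
  have tpos: "\<forall>m\<in>{1..k}. t m > 0"
  proof
    fix m assume m: "m \<in> {1..k}"
    have "\<theta> m > 0" using pos m by blast
    then show "t m > 0"
      using ll0 cpos t_l0 t_l t_o[of m] by (cases "m = l"; cases "m = l0") auto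
  qed
  have sumd: "(\<Sum>m\<in>Sj. d m) = 0"
    unfolding d_def using fSj l l0 by (simp add: sum_subtractf)
  have vt: "valid_param k S t"
    unfolding valid_param_def
  proof (intro conjI ballI)
    fix m assume "m \<in> {1..k}" then show "t m > 0" using tpos by auto
  next
    fix B assume B: "B \<in> S"
    show "open_simplex B t"
    proof (cases "B = Sj")
      case True
      have "(\<Sum>m\<in>Sj. t m) = (\<Sum>m\<in>Sj. \<theta> m) + (\<Sum>m\<in>Sj. d m)"
        unfolding t_def by (simp add: sum.distrib)
      moreover have "(\<Sum>m\<in>Sj. \<theta> m) = 1" using simpl Sj unfolding open_simplex_def by blast
      ultimately have "(\<Sum>m\<in>Sj. t m) = 1" using sumd by simp
      moreover have "\<forall>m\<in>Sj. t m > 0" using tpos sub by blast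
      ultimately show ?thesis using True unfolding open_simplex_def by blast
    next
      case False
      then have "B \<inter> Sj = {}" using part B Sj unfolding is_partition_def by blast
      then have tB: "\<forall>m\<in>B. t m = \<theta> m" using l l0 t_o by (metis disjoint_iff)
      have oB: "open_simplex B \<theta>" using simpl B by blast
      have "(\<Sum>m\<in>B. t m) = (\<Sum>m\<in>B. \<theta> m)" using tB by simp
      then show ?thesis using oB tB unfolding open_simplex_def by simp
    qed
  qed
  have tof: "\<forall>m\<in>{1..k}-Sj. t m = \<theta> m"
  proof
    fix m assume "m \<in> {1..k}-Sj"
    then have "m \<noteq> l" "m \<noteq> l0" using l l0 by auto
    then show "t m = \<theta> m" by (rule t_o)
  qed
  have eq: "mono_prob k A t y = mono_prob k A \<theta> y * (1/2) ^ A y l0" if y: "y \<in> Y" for y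
  proof -
    have "mono_prob k A t y = mono_prob k A \<theta> y * (\<Prod>m\<in>Sj. (t m / \<theta> m) ^ A y m)"
      by (rule mono_ratio[OF sub pos tof])
    also have "(\<Prod>m\<in>Sj. (t m / \<theta> m) ^ A y m)
        = (t l0 / \<theta> l0) ^ A y l0 * (\<Prod>m\<in>Sj-{l0}. (t m / \<theta> m) ^ A y m)"
      using fSj l0 by (simp add: prod.remove)
    also have "(\<Prod>m\<in>Sj-{l0}. (t m / \<theta> m) ^ A y m) = 1"
    proof (rule prod.neutral, rule ballI)
      fix m assume m: "m \<in> Sj - {l0}"
      show "(t m / \<theta> m) ^ A y m = 1"
      proof (cases "m = l")
        case True then show ?thesis using Al y by simp
      next
        case False
        have "\<theta> m > 0" using pos sub m by auto
        then show ?thesis using t_o[OF False] m by simp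
      qed
    qed
    also have "t l0 / \<theta> l0 = 1/2"
    proof -
      have "\<theta> l0 > 0" using pos sub l0 by blast
      then show ?thesis using t_l0 by simp
    qed
    finally show ?thesis by simp
  qed
  have mpos: "\<And>y. mono_prob k A \<theta> y > 0"
    unfolding mono_prob_def using pos by (auto intro!: prod_pos)
  have "(\<Sum>y\<in>Y. mono_prob k A \<theta> y * (1/2) ^ A y l0) < (\<Sum>y\<in>Y. mono_prob k A \<theta> y)"
  proof (rule sum_strict_mono_ex1[OF fY])
    show "\<forall>y\<in>Y. mono_prob k A \<theta> y * (1/2) ^ A y l0 \<le> mono_prob k A \<theta> y"
      using mpos by (auto intro!: mult_left_le power_le_one)
    have "(1/2::real) ^ A y0 l0 < 1" using y0 by (simp add: power_less_one_iff)
    then show "\<exists>y\<in>Y. mono_prob k A \<theta> y * (1/2) ^ A y l0 < mono_prob k A \<theta> y"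
      using y0 mpos[of y0] by (intro bexI[of _ y0]) auto
  qed
  moreover have "(\<Sum>y\<in>Y. mono_prob k A \<theta> y * (1/2) ^ A y l0) = 1"
  proof -
    have "(\<Sum>y\<in>Y. mono_prob k A t y) = (\<Sum>y\<in>Y. mono_prob k A \<theta> y * (1/2) ^ A y l0)"
      by (rule sum.cong) (simp_all add: eq)
    then show ?thesis using sum1 vt by simp
  qed
  moreover have "(\<Sum>y\<in>Y. mono_prob k A \<theta> y) = 1" using sum1 vp by blast
  ultimately show False by simp
qed

theorem theorem3:
  fixes Y :: "'y set" and k :: nat and A :: "'y \<Rightarrow> nat \<Rightarrow> nat"
    and S :: "nat set set" and \<theta> :: "nat \<Rightarrow> real" and Sj :: "nat set" and i :: nat
    and ti :: real and \<theta>' :: "nat \<Rightarrow> real"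
  assumes "monomial_model Y k A S \<theta>"
    and "Sj \<in> S" and "i \<in> Sj"
    and "\<forall>y\<in>Y. (\<exists>l\<in>Sj. A y l \<noteq> 0) \<longrightarrow> 0 \<le> (\<Sum>l\<in>Sj. A y l) \<and> (\<Sum>l\<in>Sj. A y l) \<le> 1"
    and "0 < ti" and "ti < 1"
    and "covariation k Sj i ti \<theta> \<theta>'"
  shows "covariation k Sj i ti \<theta> (proportional Sj i ti \<theta>) \<and>
         CD_dist Y (mono_prob k A (proportional Sj i ti \<theta>)) (mono_prob k A \<theta>)
           \<le> CD_dist Y (mono_prob k A \<theta>') (mono_prob k A \<theta>)"
proof -
  note mm = assms(1) and Sj = assms(2) and iS = assms(3) and Acond = assms(4)
  from mm have fY: "finite Y" and Yne: "Y \<noteq> {}" and part: "is_partition S k"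
    and vp: "valid_param k S \<theta>"
    unfolding monomial_model_def by auto
  have sub: "Sj \<subseteq> {1..k}" using part Sj unfolding is_partition_def by auto
  have fSj: "finite Sj" using sub finite_subset by blast
  have pos: "\<forall>m\<in>{1..k}. \<theta> m > 0" using vp unfolding valid_param_def by auto
  have sumS: "(\<Sum>m\<in>Sj. \<theta> m) = 1" using vp Sj unfolding valid_param_def open_simplex_def by auto
  have c1: "\<theta>' i = ti" and c2: "\<forall>l\<in>{1..k} - Sj. \<theta>' l = \<theta> l" and c3: "\<forall>l\<in>Sj. \<theta>' l > 0"
    and c4: "(\<Sum>l\<in>Sj. \<theta>' l) = 1"
    using assms(7) unfolding covariation_def open_simplex_def by auto
  have rem: "\<And>f::nat\<Rightarrow>real. (\<Sum>m\<in>Sj. f m) = f i + (\<Sum>m\<in>Sj-{i}. f m)"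
    using fSj iS by (simp add: sum.remove)
  have s': "(\<Sum>m\<in>Sj-{i}. \<theta>' m) = 1 - ti" using rem[of \<theta>'] c4 c1 by simp
  have s: "(\<Sum>m\<in>Sj-{i}. \<theta> m) = 1 - \<theta> i" using rem[of \<theta>] sumS by simp
  have ne: "Sj - {i} \<noteq> {}"
  proof
    assume "Sj - {i} = {}"
    then have "(\<Sum>m\<in>Sj-{i}. \<theta>' m) = 0" by (metis sum.empty)
    then show False using s' assms(6) by simp
  qed
  have "(\<Sum>m\<in>Sj-{i}. \<theta> m) > 0" using ne fSj pos sub by (intro sum_pos) auto
  then have thi1: "\<theta> i < 1" using s by simp
  have thi0: "\<theta> i > 0" using pos sub iS by auto
  define p where "p = proportional Sj i ti \<theta>"
  define a where "a = ti / \<theta> i"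
  define q where "q = (1 - ti) / (1 - \<theta> i)"
  have qsum: "(\<Sum>m\<in>Sj-{i}. q * \<theta> m) = 1 - ti"
  proof -
    have "(\<Sum>m\<in>Sj-{i}. q * \<theta> m) = q * (1 - \<theta> i)" using s by (simp add: sum_distrib_left[symmetric])
    also have "\<dots> = 1 - ti" unfolding q_def using thi1 by simp
    finally show ?thesis .
  qed
  have apos: "a > 0" unfolding a_def using thi0 assms(5) by simp
  have qpos: "q > 0" unfolding q_def using thi1 assms(6) by simp
  have p_i: "p i = ti" unfolding p_def proportional_def by simp
  have p_o: "\<And>m. m \<in> Sj - {i} \<Longrightarrow> p m = q * \<theta> m" unfolding p_def proportional_def q_def by simp
  have p_off: "\<forall>m\<in>{1..k}-Sj. p m = \<theta> m" unfolding p_def proportional_def using iS by auto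
  have cov: "covariation k Sj i ti \<theta> p"
    unfolding covariation_def open_simplex_def
  proof (intro conjI ballI)
    show "p i = ti" by (rule p_i)
  next
    fix l assume "l \<in> {1..k} - Sj" then show "p l = \<theta> l" using p_off by auto
  next
    fix l assume l: "l \<in> Sj"
    show "p l > 0"
    proof (cases "l = i")
      case True then show ?thesis using p_i assms(5) by simp
    next
      case False then show ?thesis using p_o[of l] l qpos pos sub by auto
    qed
  next
    have "(\<Sum>m\<in>Sj-{i}. p m) = (\<Sum>m\<in>Sj-{i}. q * \<theta> m)" using p_o by (rule sum.cong[OF refl])
    also have "\<dots> = q * (1 - \<theta> i)" using s by (simp add: sum_distrib_left[symmetric])
    also have "\<dots> = 1 - ti" unfolding q_def using thi1 by simp
    finally show "(\<Sum>l\<in>Sj. p l) = 1" using rem[of p] p_i by simp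
  qed
  have mpos: "\<And>y. mono_prob k A \<theta> y > 0"
    unfolding mono_prob_def using pos by (auto intro!: prod_pos)
  have pos': "\<forall>m\<in>{1..k}. \<theta>' m > 0" using c2 c3 pos by (metis DiffI)
  have mpos': "\<And>y. mono_prob k A \<theta>' y > 0"
    unfolding mono_prob_def using pos' by (auto intro!: prod_pos)
  define r where "r = (\<lambda>t y. mono_prob k A t y / mono_prob k A \<theta> y)"
  have r_eq: "r t y = (\<Prod>m\<in>Sj. (t m / \<theta> m) ^ A y m)" if "\<forall>m\<in>{1..k}-Sj. t m = \<theta> m" for t y
    unfolding r_def using mono_ratio[OF sub pos that, of A y] mpos[of y] by simp
  have r_one: "r t y = 1" if "\<forall>m\<in>{1..k}-Sj. t m = \<theta> m" "\<forall>m\<in>Sj. A y m = 0" for t y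
    using r_eq[OF that(1)] that(2) by simp
  have r_single: "r t y = t m / \<theta> m \<and> A y m = 1"
    if "\<forall>m\<in>{1..k}-Sj. t m = \<theta> m" "y \<in> Y" "m \<in> Sj" "A y m \<noteq> 0" for t y m
    using r_eq[OF that(1)] prod_single[of Sj m A y "\<lambda>m. t m / \<theta> m"] Acond that fSj
    by auto
  define M where "M = max a q"
  define \<mu> where "\<mu> = min a q"
  have a1q: "\<mu> \<le> 1 \<and> 1 \<le> M"
  proof (cases "ti \<ge> \<theta> i")
    case True
    then have "a \<ge> 1" "q \<le> 1" unfolding a_def q_def using thi0 thi1 by auto
    then show ?thesis unfolding M_def \<mu>_def by auto
  next
    case False
    then have "a \<le> 1" "q \<ge> 1" unfolding a_def q_def using thi0 thi1 by auto
    then show ?thesis unfolding M_def \<mu>_def by auto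
  qed
  have mupos: "\<mu> > 0" unfolding \<mu>_def using apos qpos by simp
  have rp_b: "\<mu> \<le> r p y \<and> r p y \<le> M" if y: "y \<in> Y" for y
  proof (cases "\<forall>m\<in>Sj. A y m = 0")
    case True then show ?thesis using r_one[OF p_off] a1q by simp
  next
    case False
    then obtain m where m: "m \<in> Sj" "A y m \<noteq> 0" by auto
    have rr: "r p y = p m / \<theta> m" using r_single[OF p_off y m] by simp
    show ?thesis
    proof (cases "m = i")
      case True then show ?thesis using rr p_i unfolding a_def M_def \<mu>_def by simp
    next
      case False
      have "\<theta> m > 0" using pos sub m(1) by blast
      then have "p m / \<theta> m = q" using p_o[of m] m False by auto
      then show ?thesis using rr unfolding M_def \<mu>_def by simp
    qed
  qed
  have fimg: "\<And>t. finite (r t ` Y)" using fY by simp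
  have neimg: "\<And>t. r t ` Y \<noteq> {}" using Yne by simp
  have MaxP: "Max (r p ` Y) \<le> M" using rp_b fimg neimg by (simp add: Max_le_iff)
  have MinP: "\<mu> \<le> Min (r p ` Y)" using rp_b fimg neimg by (simp add: Min_ge_iff)
  have MinMax: "\<And>t. Min (r t ` Y) \<le> Max (r t ` Y)"
  proof -
    fix t
    obtain y where "y \<in> Y" using Yne by auto
    then have "Min (r t ` Y) \<le> r t y" "r t y \<le> Max (r t ` Y)" using fimg by auto
    then show "Min (r t ` Y) \<le> Max (r t ` Y)" by simp
  qed
  have cdp_le: "CD_dist Y (mono_prob k A p) (mono_prob k A \<theta>) \<le> ln M - ln \<mu>"
  proof -
    have "CD_dist Y (mono_prob k A p) (mono_prob k A \<theta>) = ln (Max (r p ` Y)) - ln (Min (r p ` Y))"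
      unfolding CD_dist_def r_def by simp
    moreover have "ln (Max (r p ` Y)) \<le> ln M"
    proof -
      have "0 < Max (r p ` Y)" using MinP mupos MinMax[of p] by linarith
      then show ?thesis using MaxP by simp
    qed
    moreover have "ln \<mu> \<le> ln (Min (r p ` Y))"
      using MinP mupos by simp
    ultimately show ?thesis by simp
  qed
  have rpos': "\<And>y. r \<theta>' y > 0" unfolding r_def using mpos mpos' by simp
  have Minpos': "Min (r \<theta>' ` Y) > 0" using rpos' fimg neimg by (simp add: Min_gr_iff)
  note MinMax' = MinMax[of \<theta>']
  have cd': "CD_dist Y (mono_prob k A \<theta>') (mono_prob k A \<theta>) = ln (Max (r \<theta>' ` Y)) - ln (Min (r \<theta>' ` Y))"
    unfolding CD_dist_def r_def by simp
  have main: "CD_dist Y (mono_prob k A p) (mono_prob k A \<theta>) \<le> CD_dist Y (mono_prob k A \<theta>') (mono_prob k A \<theta>)"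
  proof (cases "\<forall>y\<in>Y. \<forall>m\<in>Sj. A y m = 0")
    case True
    then have "r p ` Y = {1}" using r_one[OF p_off] Yne by auto
    then have "CD_dist Y (mono_prob k A p) (mono_prob k A \<theta>) = 0"
    proof -
      have "CD_dist Y (mono_prob k A p) (mono_prob k A \<theta>) = ln (Max (r p ` Y)) - ln (Min (r p ` Y))"
        unfolding CD_dist_def r_def by simp
      then show ?thesis using \<open>r p ` Y = {1}\<close> by simp
    qed
    moreover have "ln (Min (r \<theta>' ` Y)) \<le> ln (Max (r \<theta>' ` Y))" using Minpos' MinMax' by simp
    ultimately show ?thesis using cd' by simp
  next
    case False
    then obtain y0 l0 where y0: "y0 \<in> Y" "l0 \<in> Sj" "A y0 l0 \<noteq> 0" by auto
    have inimg: "\<theta>' m / \<theta> m \<in> r \<theta>' ` Y" if m: "m \<in> Sj" for m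
    proof -
      obtain y where y: "y \<in> Y" "A y m \<noteq> 0" using all_used[OF mm Sj y0(2) y0(1) y0(3) m] by auto
      then show ?thesis using r_single[OF c2 y(1) m y(2)] by force
    qed
    have bnd: "Min (r \<theta>' ` Y) \<le> \<theta>' m / \<theta> m \<and> \<theta>' m / \<theta> m \<le> Max (r \<theta>' ` Y)" if "m \<in> Sj" for m
      using inimg[OF that] fimg by auto
    obtain l1 where l1: "l1 \<in> Sj - {i}" "q \<le> \<theta>' l1 / \<theta> l1"
    proof (rule ccontr)
      assume "\<not> thesis"
      have lt: "\<forall>m\<in>Sj-{i}. \<theta>' m < q * \<theta> m"
      proof
        fix m assume m: "m \<in> Sj - {i}"
        have "\<theta> m > 0" using pos sub m by blast
        moreover have "\<theta>' m / \<theta> m < q" using that[OF m] \<open>\<not> thesis\<close> by force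
        ultimately show "\<theta>' m < q * \<theta> m" by (simp add: divide_less_eq)
      qed
      have "(\<Sum>m\<in>Sj-{i}. \<theta>' m) < (\<Sum>m\<in>Sj-{i}. q * \<theta> m)"
        using fSj ne lt by (intro sum_strict_mono) auto
      also have "\<dots> = 1 - ti" by (rule qsum)
      finally show False using s' by simp
    qed
    obtain l2 where l2: "l2 \<in> Sj - {i}" "\<theta>' l2 / \<theta> l2 \<le> q"
    proof (rule ccontr)
      assume "\<not> thesis"
      have lt: "\<forall>m\<in>Sj-{i}. q * \<theta> m < \<theta>' m"
      proof
        fix m assume m: "m \<in> Sj - {i}"
        have "\<theta> m > 0" using pos sub m by blast
        moreover have "q < \<theta>' m / \<theta> m" using that[OF m] \<open>\<not> thesis\<close> by force
        ultimately show "q * \<theta> m < \<theta>' m" by (simp add: less_divide_eq)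
      qed
      have "(\<Sum>m\<in>Sj-{i}. q * \<theta> m) < (\<Sum>m\<in>Sj-{i}. \<theta>' m)"
        using fSj ne lt by (intro sum_strict_mono) auto
      moreover have "(\<Sum>m\<in>Sj-{i}. q * \<theta> m) = 1 - ti" by (rule qsum)
      ultimately show False using s' by simp
    qed
    have ai: "\<theta>' i / \<theta> i = a" unfolding a_def using c1 by simp
    have "M \<le> Max (r \<theta>' ` Y)" unfolding M_def using bnd[OF iS] bnd[of l1] l1 ai by auto
    moreover have "Min (r \<theta>' ` Y) \<le> \<mu>" unfolding \<mu>_def using bnd[OF iS] bnd[of l2] l2 ai by auto
    moreover have "M > 0" using a1q by simp
    ultimately have "ln M \<le> ln (Max (r \<theta>' ` Y))" "ln (Min (r \<theta>' ` Y)) \<le> ln \<mu>"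
      using mupos Minpos' by auto
    then have "ln M - ln \<mu> \<le> ln (Max (r \<theta>' ` Y)) - ln (Min (r \<theta>' ` Y))" by simp
    then show ?thesis using cdp_le cd' by simp
  qed
  show ?thesis using cov main unfolding p_def by simp
qed

end
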